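(* Let $n>1$ and let $t_1<\cdots<t_{n+1}$ be real nodes. Let $L=(\prod_{k=1}^{j-1}(t_i-t_k))_{1\le i,j\le n+1}$ be the collocation matrix of the Newton basis at these nodes and let $BD(L)=(b_{i,j})_{1\le i,j\le n+1}$ be the matrix with $b_{i,j}=0$ for $i<j$, $b_{i,i}=\prod_{k=1}^{i-1}(t_i-t_k)$, and $b_{i,j}=\prod_{k=1}^{j-1}\frac{t_i-t_{i-k}}{t_{i-1}-t_{i-k-1}}$ for $i>j$. Suppose the entries are computed in floating-point arithmetic with unit roundoff $u$, with $(4n-5)u<1$, by the following algorithms: Algorithm 1 (for $i>j$): for $i=2,\dots,n+1$, set $m_{i,1}:=1$ and for $j=2,\dots,i-1$ set $M:=\frac{t_i-t_{i-j+1}}{t_{i-1}-t_{i-j}}$ and $m_{i,j}:=m_{i,j-1}\cdot M$; then $b_{i,j}=m_{i,j}$. Algorithm 2 (for $i=j$): set $p_1:=1$; for $i=2,\dots,n+1$ set $p_i:=1$ and for $k=1,\dots,i-1$ set $p_i:=p_i\cdot(t_i-t_{i-k})$; then $b_{i,i}=p_i$. Let $\mathrm{fl}(b_{i,j})$ denote the computed values. Then $$\left|\frac{b_{i,j}-\mathrm{fl}(b_{i,j})}{b_{i,j}}\right|\le\gamma_{4n-5},\qquad 1\le j\le i\le n+1.$$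
   Context: Floating-point model: for elementary operations $\mathrm{op}\in\{+,-,\times,/\}$, $\mathrm{fl}(a\,\mathrm{op}\,b)=(a\,\mathrm{op}\,b)(1+\delta)^{\pm1}$ with $|\delta|\le u$. For $k\in\mathbb N$ with $ku<1$, $\gamma_k:=\frac{ku}{1-ku}$. *)

theory Defs
  imports Complex_Main
begin

definition gamma :: "real \<Rightarrow> real \<Rightarrow> real" where
  "gamma k u = k * u / (1 - k * u)"

definition fp_op :: "real \<Rightarrow> (real \<Rightarrow> real \<Rightarrow> real) \<Rightarrow> (real \<Rightarrow> real \<Rightarrow> real) \<Rightarrow> bool" where
  "fp_op u op fop \<longleftrightarrow> (\<forall>a b. \<exists>\<delta>. \<bar>\<delta>\<bar> \<le> u \<and>
      (fop a b = op a b * (1 + \<delta>) \<or> fop a b = op a b / (1 + \<delta>)))"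

text \<open>Exact entries of BD(L) (1-based indices, nodes t 1, ..., t (n+1)).\<close>
definition bd :: "(nat \<Rightarrow> real) \<Rightarrow> nat \<Rightarrow> nat \<Rightarrow> real" where
  "bd t i j = (if i < j then 0
     else if i = j then (\<Prod>k = 1..i-1. t i - t k)
     else (\<Prod>k = 1..j-1. (t i - t (i - k)) / (t (i - 1) - t (i - k - 1))))"

fun alg1 :: "(real \<Rightarrow> real \<Rightarrow> real) \<Rightarrow> (real \<Rightarrow> real \<Rightarrow> real) \<Rightarrow> (real \<Rightarrow> real \<Rightarrow> real)
    \<Rightarrow> (nat \<Rightarrow> real) \<Rightarrow> nat \<Rightarrow> nat \<Rightarrow> real" where
  "alg1 fsub fmul fdiv t i 0 = 1"
| "alg1 fsub fmul fdiv t i (Suc 0) = 1"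
| "alg1 fsub fmul fdiv t i (Suc (Suc j)) =
     fmul (alg1 fsub fmul fdiv t i (Suc j))
          (fdiv (fsub (t i) (t (i - Suc j))) (fsub (t (i - 1)) (t (i - Suc j - 1))))"

text \<open>Algorithm 2: value of p_i after k steps of the inner loop:
  p := 1; for k: p := fl(p * fl(t i - t (i-k))).\<close>
fun alg2 :: "(real \<Rightarrow> real \<Rightarrow> real) \<Rightarrow> (real \<Rightarrow> real \<Rightarrow> real)
    \<Rightarrow> (nat \<Rightarrow> real) \<Rightarrow> nat \<Rightarrow> nat \<Rightarrow> real" where
  "alg2 fsub fmul t i 0 = 1"
| "alg2 fsub fmul t i (Suc k) = fmul (alg2 fsub fmul t i k) (fsub (t i) (t (i - Suc k)))"

definition fl_bd :: "(real \<Rightarrow> real \<Rightarrow> real) \<Rightarrow> (real \<Rightarrow> real \<Rightarrow> real) \<Rightarrow> (real \<Rightarrow> real \<Rightarrow> real)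
    \<Rightarrow> (nat \<Rightarrow> real) \<Rightarrow> nat \<Rightarrow> nat \<Rightarrow> real" where
  "fl_bd fsub fmul fdiv t i j = (if i = j then alg2 fsub fmul t i (i - 1) else alg1 fsub fmul fdiv t i j)"

end

theory Submission
  imports Defs
begin

definition FF :: "real \<Rightarrow> nat \<Rightarrow> real \<Rightarrow> bool" where
  "FF u m x \<longleftrightarrow> (1 - u) ^ m \<le> x \<and> x \<le> 1 / (1 - u) ^ m"

lemma FF_pos: "0 \<le> u \<Longrightarrow> u < 1 \<Longrightarrow> FF u m x \<Longrightarrow> 0 < x"
  unfolding FF_def by (smt (verit) zero_less_power)

lemma FF_one: "FF u 0 1" unfolding FF_def by simp

lemma FF_mult:
  assumes u: "0 \<le> u" "u < 1" and a: "FF u a x" and b: "FF u b y"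
  shows "FF u (a + b) (x * y)"
proof -
  have p1: "0 < (1 - u) ^ a" "0 < (1 - u) ^ b" using u by simp_all
  have "(1 - u) ^ a * (1 - u) ^ b \<le> x * y"
    using a b p1 unfolding FF_def by (intro mult_mono) auto
  moreover have "x * y \<le> (1 / (1 - u) ^ a) * (1 / (1 - u) ^ b)"
    using a b p1 FF_pos[OF u a] unfolding FF_def by (intro mult_mono) auto
  ultimately show ?thesis unfolding FF_def by (simp add: power_add)
qed

lemma FF_inv:
  assumes u: "0 \<le> u" "u < 1" and a: "FF u a x"
  shows "FF u a (1 / x)"
proof -
  have p1: "0 < (1 - u) ^ a" using u by simp
  have xp: "0 < x" using FF_pos[OF u a] .
  have "(1 - u) ^ a \<le> 1 / x"
    using a p1 xp unfolding FF_def by (simp add: field_simps)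
  moreover have "1 / x \<le> 1 / (1 - u) ^ a"
    using a p1 xp unfolding FF_def by (simp add: field_simps)
  ultimately show ?thesis unfolding FF_def by simp
qed

lemma FF_mono:
  assumes u: "0 \<le> u" "u < 1" and a: "FF u a x" and le: "a \<le> b"
  shows "FF u b x"
proof -
  have "(1 - u) ^ b \<le> (1 - u) ^ a" using u le by (intro power_decreasing) auto
  moreover have "0 < (1 - u) ^ b" using u by simp
  ultimately have "1 / (1 - u) ^ a \<le> 1 / (1 - u) ^ b"
    by (intro divide_left_mono) auto
  with \<open>(1 - u) ^ b \<le> (1 - u) ^ a\<close> a show ?thesis unfolding FF_def by auto
qed

lemma fp_u_nonneg: "fp_op u op f \<Longrightarrow> 0 \<le> u"
  unfolding fp_op_def by force

lemma FF_d:
  assumes "\<bar>d\<bar> \<le> u" "u < 1" "0 \<le> u"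
  shows "FF u 1 (1 + d)"
proof -
  have "(1 + d) * (1 - u) \<le> (1 + u) * (1 - u)"
    using assms by (intro mult_right_mono) auto
  also have "\<dots> \<le> 1" by (simp add: algebra_simps)
  finally have "1 + d \<le> 1 / (1 - u)" using assms by (simp add: field_simps)
  moreover have "1 - u \<le> 1 + d" using assms by simp
  ultimately show ?thesis unfolding FF_def by simp
qed

lemma fp_FF:
  assumes "fp_op u op f" "u < 1"
  shows "\<exists>P. FF u 1 P \<and> f a b = op a b * P"
proof -
  obtain d where d: "\<bar>d\<bar> \<le> u" "f a b = op a b * (1 + d) \<or> f a b = op a b / (1 + d)"
    using assms(1) unfolding fp_op_def by blast
  have u0: "0 \<le> u" using d by simp
  show ?thesis
  proof (cases "f a b = op a b * (1 + d)")
    case True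
    have "FF u 1 (1 + d)" using d(1) assms(2) u0 by (rule FF_d)
    then show ?thesis using True by blast
  next
    case False
    then have e: "f a b = op a b * (1 / (1 + d))" using d by simp
    have "FF u 1 (1 + d)" using d(1) assms(2) u0 by (rule FF_d)
    then have "FF u 1 (1 / (1 + d))" using FF_inv u0 assms(2) by blast
    then show ?thesis using e by blast
  qed
qed

lemma FF_gamma:
  assumes u: "0 \<le> u" and u1: "u < 1" and mu: "real m * u < 1" and F: "FF u m P"
  shows "\<bar>1 - P\<bar> \<le> gamma (real m) u"
proof -
  have bern: "1 - real m * u \<le> (1 - u) ^ m"
    using Bernoulli_inequality[of "-u" m] u1 by simp
  have pos: "0 < 1 - real m * u" using mu by simp
  have g: "gamma (real m) u = real m * u / (1 - real m * u)" unfolding gamma_def by simp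
  have A: "real m * u \<le> real m * u / (1 - real m * u)"
    using pos u u1 by (simp add: field_simps mult_le_cancel_left1)
  have "1 - P \<le> real m * u" using F bern unfolding FF_def by simp
  moreover have "P - 1 \<le> real m * u / (1 - real m * u)"
  proof -
    have "P \<le> 1 / (1 - u) ^ m" using F unfolding FF_def by simp
    also have "\<dots> \<le> 1 / (1 - real m * u)"
      using bern pos by (intro divide_left_mono) auto
    finally show ?thesis using pos by (simp add: field_simps)
  qed
  ultimately show ?thesis using A g by linarith
qed

lemma alg2_err:
  assumes u: "0 \<le> u" "u < 1" and fs: "fp_op u (-) fsub" and fm: "fp_op u (*) fmul"
    and m1: "\<And>x. fmul 1 x = x"
  shows "\<exists>P. FF u (2 * k - 1) P \<and> alg2 fsub fmul t i k = (\<Prod>k'=1..k. t i - t (i - k')) * P"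
proof (induction k)
  case 0
  then show ?case using FF_one by auto
next
  case (Suc k)
  obtain P1 where P1: "FF u 1 P1" "fsub (t i) (t (i - Suc k)) = (t i - t (i - Suc k)) * P1"
    using fp_FF[OF fs u(2)] by blast
  show ?case
  proof (cases "k = 0")
    case True
    then show ?thesis using P1 m1 by auto
  next
    case False
    obtain P0 where P0: "FF u (2 * k - 1) P0" "alg2 fsub fmul t i k = (\<Prod>k'=1..k. t i - t (i - k')) * P0"
      using Suc by blast
    obtain P2 where P2: "FF u 1 P2" "fmul (alg2 fsub fmul t i k) (fsub (t i) (t (i - Suc k)))
        = (alg2 fsub fmul t i k) * (fsub (t i) (t (i - Suc k))) * P2"
      using fp_FF[OF fm u(2)] by blast
    have "FF u (2 * k - 1 + 1 + 1) (P0 * P1 * P2)"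
      using FF_mult[OF u] P0(1) P1(1) P2(1) by blast
    moreover have "2 * k - 1 + 1 + 1 = 2 * Suc k - 1" using False by simp
    moreover have "alg2 fsub fmul t i (Suc k) = (\<Prod>k'=1..Suc k. t i - t (i - k')) * (P0 * P1 * P2)"
      using P0(2) P1(2) P2(2) by (simp add: prod.nat_ivl_Suc')
    ultimately show ?thesis by metis
  qed
qed

lemma alg1_err:
  assumes u: "0 \<le> u" "u < 1" and fs: "fp_op u (-) fsub" and fm: "fp_op u (*) fmul"
    and fd: "fp_op u (/) fdiv"
    and m1: "\<And>x. fmul 1 x = x"
  shows "\<exists>P. FF u (4 * Suc j - 5) P \<and> alg1 fsub fmul fdiv t i (Suc j)
     = (\<Prod>k=1..Suc j - 1. (t i - t (i - k)) / (t (i - 1) - t (i - k - 1))) * P"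
proof (induction j)
  case 0
  then show ?case using FF_one by auto
next
  case (Suc j)
  define A where "A = t i - t (i - Suc j)"
  define B where "B = t (i - 1) - t (i - Suc j - 1)"
  obtain P1 where P1: "FF u 1 P1" "fsub (t i) (t (i - Suc j)) = A * P1"
    using fp_FF[OF fs u(2)] A_def by blast
  obtain P2 where P2: "FF u 1 P2" "fsub (t (i - 1)) (t (i - Suc j - 1)) = B * P2"
    using fp_FF[OF fs u(2)] B_def by blast
  obtain P3 where P3: "FF u 1 P3" "fdiv (A * P1) (B * P2) = (A * P1) / (B * P2) * P3"
    using fp_FF[OF fd u(2)] by blast
  have p2: "P2 \<noteq> 0" using FF_pos[OF u P2(1)] by simp
  have D: "fdiv (fsub (t i) (t (i - Suc j))) (fsub (t (i - 1)) (t (i - Suc j - 1)))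
      = (A / B) * (P1 * (1 / P2) * P3)"
    using P1(2) P2(2) P3(2) p2 by simp
  have FD: "FF u (1 + 1 + 1) (P1 * (1 / P2) * P3)"
    using FF_mult[OF u] FF_inv[OF u P2(1)] P1(1) P3(1) by blast
  have prodS: "(\<Prod>k=1..Suc (Suc j) - 1. (t i - t (i - k)) / (t (i - 1) - t (i - k - 1)))
     = (\<Prod>k=1..Suc j - 1. (t i - t (i - k)) / (t (i - 1) - t (i - k - 1))) * (A / B)"
    unfolding A_def B_def by (simp add: prod.nat_ivl_Suc')
  show ?case
  proof (cases "j = 0")
    case True
    have "alg1 fsub fmul fdiv t i (Suc (Suc j)) = (A / B) * (P1 * (1 / P2) * P3)"
      using D m1 True by simp
    also have "\<dots> = (\<Prod>k=1..Suc (Suc j) - 1. (t i - t (i - k)) / (t (i - 1) - t (i - k - 1))) * (P1 * (1 / P2) * P3)"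
      unfolding A_def B_def True by simp
    finally have e: "alg1 fsub fmul fdiv t i (Suc (Suc j)) = (\<Prod>k=1..Suc (Suc j) - 1. (t i - t (i - k)) / (t (i - 1) - t (i - k - 1))) * (P1 * (1 / P2) * P3)" .
    have n3: "4 * Suc (Suc j) - 5 = 1 + 1 + 1" using True by simp
    show ?thesis
      by (rule exI[of _ "P1 * (1 / P2) * P3"], subst n3, rule conjI[OF FD e])
  next
    case False
    obtain P0 where P0: "FF u (4 * Suc j - 5) P0" "alg1 fsub fmul fdiv t i (Suc j)
     = (\<Prod>k=1..Suc j - 1. (t i - t (i - k)) / (t (i - 1) - t (i - k - 1))) * P0"
      using Suc by blast
    obtain P4 where P4: "FF u 1 P4" "fmul (alg1 fsub fmul fdiv t i (Suc j)) ((A / B) * (P1 * (1 / P2) * P3))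
        = alg1 fsub fmul fdiv t i (Suc j) * ((A / B) * (P1 * (1 / P2) * P3)) * P4"
      using fp_FF[OF fm u(2)] by blast
    have "FF u (4 * Suc j - 5 + (1 + 1 + 1) + 1) (P0 * (P1 * (1 / P2) * P3) * P4)"
      using FF_mult[OF u] P0(1) FD P4(1) by blast
    moreover have "4 * Suc j - 5 + (1 + 1 + 1) + 1 = 4 * Suc (Suc j) - 5" using False by simp
    moreover have "alg1 fsub fmul fdiv t i (Suc (Suc j)) =
       (\<Prod>k=1..Suc (Suc j) - 1. (t i - t (i - k)) / (t (i - 1) - t (i - k - 1))) * (P0 * (P1 * (1 / P2) * P3) * P4)"
      using P4(2) D P0(2) prodS by simp
    ultimately show ?thesis by metis
  qed
qed

lemma final_step:
  fixes b fl P g :: real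
  assumes "fl = b * P" "\<bar>1 - P\<bar> \<le> g" "0 \<le> g"
  shows "\<bar>(b - fl) / b\<bar> \<le> g"
proof (cases "b = 0")
  case True
  then have "\<bar>(b - fl) / b\<bar> = 0" by simp
  then show ?thesis using assms(3) by linarith
next
  case False
  have "(b - fl) / b = 1 - P" using assms(1) False by (simp add: field_simps)
  then show ?thesis using assms by simp
qed

theorem theorem3:
  fixes n :: nat and t :: "nat \<Rightarrow> real" and u :: real
    and fsub fmul fdiv :: "real \<Rightarrow> real \<Rightarrow> real"
  assumes "n > 1"
    and "strict_mono_on {1..n+1} t"
    and "(4 * real n - 5) * u < 1"
    and "fp_op u (-) fsub" and "fp_op u (*) fmul" and "fp_op u (/) fdiv"
    and "\<And>x. fmul 1 x = x"
  shows "\<forall>i j. 1 \<le> j \<and> j \<le> i \<and> i \<le> n + 1 \<longrightarrow>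
           \<bar>(bd t i j - fl_bd fsub fmul fdiv t i j) / bd t i j\<bar> \<le> gamma (4 * real n - 5) u"
proof (intro allI impI)
  fix i j assume ij: "1 \<le> j \<and> j \<le> i \<and> i \<le> n + 1"
  define M where "M = 4 * n - 5"
  have n5: "5 \<le> 4 * n" using assms(1) by simp
  have RM: "real M = 4 * real n - 5" using n5 unfolding M_def by (simp add: of_nat_diff)
  have u0: "0 \<le> u" using fp_u_nonneg[OF assms(4)] .
  have Mu: "real M * u < 1" using RM assms(3) by simp
  have u1: "u < 1"
  proof -
    have "real n \<ge> 2" using assms(1) by simp
    then have "real M \<ge> 1" using RM by linarith
    then have "u \<le> real M * u" using u0 by (simp add: mult_le_cancel_right1)
    then show ?thesis using Mu by simp
  qed
  have g0: "0 \<le> gamma (real M) u" unfolding gamma_def using u0 Mu by simp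
  have key: "\<exists>P. FF u M P \<and> fl_bd fsub fmul fdiv t i j = bd t i j * P"
  proof (cases "i = j")
    case True
    obtain P where P: "FF u (2 * (i - 1) - 1) P"
      "alg2 fsub fmul t i (i - 1) = (\<Prod>k'=1..i - 1. t i - t (i - k')) * P"
      using alg2_err[OF u0 u1 assms(4) assms(5) assms(7)] by blast
    have "(\<Prod>k'=1..i - 1. t i - t (i - k')) = (\<Prod>k=1..i - 1. t i - t k)"
      by (rule prod.reindex_bij_witness[where i="\<lambda>k. i - k" and j="\<lambda>k. i - k"]) auto
    then have e: "fl_bd fsub fmul fdiv t i j = bd t i j * P"
      using P True unfolding fl_bd_def bd_def by simp
    have "2 * (i - 1) - 1 \<le> M" using ij assms(1) unfolding M_def by arith
    then show ?thesis using FF_mono[OF u0 u1 P(1)] e by blast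
  next
    case False
    obtain j' where j': "j = Suc j'" using ij by (cases j) auto
    obtain P where P: "FF u (4 * Suc j' - 5) P" "alg1 fsub fmul fdiv t i (Suc j')
     = (\<Prod>k=1..Suc j' - 1. (t i - t (i - k)) / (t (i - 1) - t (i - k - 1))) * P"
      using alg1_err[OF u0 u1 assms(4) assms(5) assms(6) assms(7)] by blast
    have e: "fl_bd fsub fmul fdiv t i j = bd t i j * P"
      using P False ij j' unfolding fl_bd_def bd_def by simp
    have "4 * Suc j' - 5 \<le> M" using ij False j' unfolding M_def by arith
    then show ?thesis using FF_mono[OF u0 u1 P(1)] e by blast
  qed
  then obtain P where P: "FF u M P" "fl_bd fsub fmul fdiv t i j = bd t i j * P" by blast
  have "\<bar>1 - P\<bar> \<le> gamma (real M) u" using FF_gamma[OF u0 u1 Mu P(1)] .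
  then show "\<bar>(bd t i j - fl_bd fsub fmul fdiv t i j) / bd t i j\<bar> \<le> gamma (4 * real n - 5) u"
    using final_step[OF P(2) _ g0] RM by simp
qed

end
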